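(* In the #-KEG, suppose that the IA algorithm $\mathcal{A}$, whenever the remaining external graph $(V,E^I(\mathbf{M}))$ has several maximum-cardinality matchings, selects one that lexicographically maximizes the numbers of matched vertices of the players taken in non-increasing order of their number of revealed vertices (i.e. it first maximizes the number of matched vertices of the player with the most revealed vertices, then of the second, etc.), this rule being applied in whatever game results from the players' revelations. Then no player has a strict incentive to hide vertices: for every player $p$, every profile $M^{-p}$ of matchings of the opponents' graphs, and every subset $V'\subseteq V^p$, the maximum utility player $p$ can achieve (over matchings $M^p$ of $G^p$) when all her vertices are revealed is at least $2\nu(G^p[V'])$ plus the maximum utility she can achieve (over matchings of $G^p-V'$) in the game in which the vertices of $V'$ and their incident edges are removed, where $\nu(G^p[V'])$ is the size of a maximum matching of the subgraph of $G^p$ induced by $V'$.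
   Context: The #-KEG: $N=\{1,\dots,n\}$ is a finite set of players; player $p$ has internal graph $G^p=(V^p,E^p)$ (vertex sets pairwise disjoint); $E^I$ is a set of external edges each joining vertices of two different players; $G=(V,E)$ with $V=\bigcup_pV^p$, $E=E^I\cup\bigcup_pE^p$. A strategy of player $p$ is a matching $M^p$ of $G^p$. Given $\mathbf{M}=(M^1,\dots,M^n)$, $E^I(\mathbf{M})$ is the set of external edges with both endpoints uncovered by $\bigcup_pM^p$, and the IA selects a maximum-cardinality matching $M^I=\mathcal{A}(\mathbf{M})$ of $(V,E^I(\mathbf{M}))$ via a deterministic algorithm $\mathcal{A}$. With $M^I_p$ the edges of $M^I$ incident to $V^p$, player $p$'s utility is $2|M^p|+|M^I_p|$. Hiding a set $V'\subseteq V^p$ means that the game is played on $G$ with $V'$ and all edges incident to $V'$ removed, while player $p$ can additionally match the hidden vertices among themselves using edges of $G^p$ inside $V'$, each such internal edge adding 2 to her utility. *)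

theory Defs
  imports Main
begin

text \<open>Vertices have type 'v, players have type 'p (linearly ordered; the order
  is used only to break ties between players with equally many revealed vertices).
  own v is the player owning vertex v.\<close>

definition is_edge :: "'v set \<Rightarrow> bool" where
  "is_edge e \<longleftrightarrow> (\<exists>u w. u \<noteq> w \<and> e = {u, w})"

definition matching_of :: "'v set set \<Rightarrow> 'v set set \<Rightarrow> bool" where
  "matching_of F M \<longleftrightarrow> M \<subseteq> F \<and> (\<forall>e\<in>M. \<forall>e'\<in>M. e \<noteq> e' \<longrightarrow> e \<inter> e' = {})"

definition max_matching_of :: "'v set set \<Rightarrow> 'v set set \<Rightarrow> bool" where
  "max_matching_of F M \<longleftrightarrow> matching_of F M \<and> (\<forall>M'. matching_of F M' \<longrightarrow> card M' \<le> card M)"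

definition nu :: "'v set set \<Rightarrow> nat" where
  "nu F = Max (card ` {M. matching_of F M})"

definition owned :: "('v \<Rightarrow> 'p) \<Rightarrow> 'v set \<Rightarrow> 'p \<Rightarrow> 'v set" where
  "owned own A q = {v \<in> A. own v = q}"

definition cov :: "('v \<Rightarrow> 'p) \<Rightarrow> 'v set set \<Rightarrow> 'p \<Rightarrow> nat" where
  "cov own M q = card (owned own (\<Union>M) q)"

text \<open>prior own R r q: r comes strictly before q in the order of non-increasing
  number of revealed vertices (R = revealed vertex set), ties broken by the order on players.\<close>
definition prior :: "('v \<Rightarrow> 'p::linorder) \<Rightarrow> 'v set \<Rightarrow> 'p \<Rightarrow> 'p \<Rightarrow> bool" where
  "prior own R r q \<longleftrightarrow> card (owned own R r) > card (owned own R q)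
     \<or> (card (owned own R r) = card (owned own R q) \<and> r < q)"

definition lex_geq :: "'p::linorder set \<Rightarrow> ('v \<Rightarrow> 'p) \<Rightarrow> 'v set \<Rightarrow> 'v set set \<Rightarrow> 'v set set \<Rightarrow> bool" where
  "lex_geq N own R M M' \<longleftrightarrow>
     (\<forall>q\<in>N. cov own M q = cov own M' q) \<or>
     (\<exists>q\<in>N. cov own M q > cov own M' q \<and>
        (\<forall>r\<in>N. prior own R r q \<longrightarrow> cov own M r = cov own M' r))"

definition ia_rule :: "'p::linorder set \<Rightarrow> ('v \<Rightarrow> 'p) \<Rightarrow> 'v set \<Rightarrow> 'v set set \<Rightarrow> 'v set set \<Rightarrow> bool" where
  "ia_rule N own R F M \<longleftrightarrow> max_matching_of F M \<and>
     (\<forall>M'. max_matching_of F M' \<longrightarrow> lex_geq N own R M M')"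

text \<open>External edges available to the IA: inside the revealed set R and with both
  endpoints uncovered by the union U of the internal matchings.\<close>
definition available :: "'v set set \<Rightarrow> 'v set \<Rightarrow> 'v set \<Rightarrow> 'v set set" where
  "available EI R U = {e \<in> EI. e \<subseteq> R \<and> e \<inter> U = {}}"

text \<open>Utility of player p under profile Mq, in the game on revealed vertex set R,
  with IA algorithm IA (input: revealed vertex set and remaining external edges).\<close>
definition utility :: "'p set \<Rightarrow> ('v \<Rightarrow> 'p) \<Rightarrow> 'v set set
    \<Rightarrow> ('v set \<Rightarrow> 'v set set \<Rightarrow> 'v set set) \<Rightarrow> 'v set \<Rightarrow> ('p \<Rightarrow> 'v set set) \<Rightarrow> 'p \<Rightarrow> nat" where
  "utility N own EI IA R Mq p =
     2 * card (Mq p) +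
     card {e \<in> IA R (available EI R (\<Union>q\<in>N. \<Union>(Mq q))). \<exists>v\<in>e. own v = p}"

definition best_utility :: "'p set \<Rightarrow> ('v \<Rightarrow> 'p) \<Rightarrow> 'v set set
    \<Rightarrow> ('v set \<Rightarrow> 'v set set \<Rightarrow> 'v set set) \<Rightarrow> 'v set \<Rightarrow> 'v set set
    \<Rightarrow> ('p \<Rightarrow> 'v set set) \<Rightarrow> 'p \<Rightarrow> nat" where
  "best_utility N own EI IA R Fp Mo p =
     Max ((\<lambda>Mp. utility N own EI IA R (Mo(p := Mp)) p) ` {Mp. matching_of Fp Mp})"

end

theory Submission
  imports Defs
begin

lemma matching_card:
  assumes "matching_of F M" "finite F" "\<forall>e\<in>F. is_edge e"
  shows "card (\<Union>M) = 2 * card M"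
proof -
  have MF: "M \<subseteq> F" using assms(1) by (simp add: matching_of_def)
  have "card (\<Union>M) = sum card M"
  proof (rule card_Union_disjoint)
    show "pairwise disjnt M" using assms(1) by (auto simp: matching_of_def pairwise_def disjnt_def)
    fix A assume "A \<in> M" then have "is_edge A" using MF assms(3) by auto
    then show "finite A" by (auto simp: is_edge_def)
  qed
  also have "\<dots> = sum (\<lambda>_. 2) M"
  proof (rule sum.cong)
    fix e assume "e \<in> M" then have "is_edge e" using MF assms(3) by auto
    then show "card e = 2" by (auto simp: is_edge_def)
  qed simp
  also have "\<dots> = 2 * card M" by simp
  finally show ?thesis .
qed

lemma edge_other: "is_edge e \<Longrightarrow> v \<in> e \<Longrightarrow> \<exists>u. e = {v, u} \<and> u \<noteq> v"
  unfolding is_edge_def by auto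

definition deg2 :: "'v set set \<Rightarrow> bool" where
  "deg2 D \<longleftrightarrow> (\<forall>x e1 e2 e3. e1 \<in> D \<longrightarrow> e2 \<in> D \<longrightarrow> e3 \<in> D \<longrightarrow> x \<in> e1 \<longrightarrow> x \<in> e2 \<longrightarrow> x \<in> e3
     \<longrightarrow> e1 = e2 \<or> e1 = e3 \<or> e2 = e3)"

lemma uniq_of_disj:
  assumes "\<forall>e\<in>M. \<forall>e'\<in>M. e\<noteq>e' \<longrightarrow> e\<inter>e'={}" "a \<in> M" "b \<in> M" "x \<in> a" "x \<in> b"
  shows "a = b"
  using assms by blast
lemma deg2_symdiff:
  assumes m1: "\<forall>e\<in>M1. \<forall>e'\<in>M1. e\<noteq>e' \<longrightarrow> e\<inter>e'={}"
    and m2: "\<forall>e\<in>M2. \<forall>e'\<in>M2. e\<noteq>e' \<longrightarrow> e\<inter>e'={}"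
  shows "deg2 ((M1-M2)\<union>(M2-M1))"
  unfolding deg2_def
proof (intro allI impI)
  fix x e1 e2 e3 assume h: "e1 \<in> (M1-M2)\<union>(M2-M1)" "e2 \<in> (M1-M2)\<union>(M2-M1)" "e3 \<in> (M1-M2)\<union>(M2-M1)"
    "x \<in> e1" "x \<in> e2" "x \<in> e3"
  have u1: "a = b" if "a \<in> M1" "b \<in> M1" "x \<in> a" "x \<in> b" for a b using uniq_of_disj[OF m1 that] .
  have u2: "a = b" if "a \<in> M2" "b \<in> M2" "x \<in> a" "x \<in> b" for a b using uniq_of_disj[OF m2 that] .
  have "e1 \<in> M1 \<or> e1 \<in> M2" "e2 \<in> M1 \<or> e2 \<in> M2" "e3 \<in> M1 \<or> e3 \<in> M2" using h by auto
  then show "e1 = e2 \<or> e1 = e3 \<or> e2 = e3" using u1 u2 h(4-6) by metis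
qed
lemma two_edges:
  assumes m1: "\<forall>e\<in>M1. \<forall>e'\<in>M1. e\<noteq>e' \<longrightarrow> e\<inter>e'={}"
    and m2: "\<forall>e\<in>M2. \<forall>e'\<in>M2. e\<noteq>e' \<longrightarrow> e\<inter>e'={}"
    and h: "e1 \<in> (M1-M2)\<union>(M2-M1)" "e2 \<in> (M1-M2)\<union>(M2-M1)" "e1 \<noteq> e2" "x \<in> e1" "x \<in> e2"
  shows "x \<in> \<Union>M1 \<and> x \<in> \<Union>M2"
proof -
  have u1: "a = b" if "a \<in> M1" "b \<in> M1" "x \<in> a" "x \<in> b" for a b using uniq_of_disj[OF m1 that] .
  have u2: "a = b" if "a \<in> M2" "b \<in> M2" "x \<in> a" "x \<in> b" for a b using uniq_of_disj[OF m2 that] .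
  have "(e1 \<in> M1 \<and> e2 \<in> M2) \<or> (e1 \<in> M2 \<and> e2 \<in> M1)" using h u1 u2 by blast
  then show ?thesis using h by blast
qed

lemma path_comp:
  assumes "finite D"
  shows "\<forall>e\<in>D. is_edge e \<Longrightarrow> deg2 D \<Longrightarrow> e0 \<in> D \<Longrightarrow> v \<in> e0 \<Longrightarrow> (\<forall>e\<in>D. v\<in>e \<longrightarrow> e = e0) \<Longrightarrow>
   \<exists>C w. C \<subseteq> D \<and> e0 \<in> C \<and> (\<forall>e\<in>D. e \<inter> \<Union>C \<noteq> {} \<longrightarrow> e \<in> C) \<and> w \<in> \<Union>C \<and> w \<noteq> v
     \<and> (\<exists>e\<in>D. w\<in>e \<and> (\<forall>e'\<in>D. w\<in>e' \<longrightarrow> e'=e))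
     \<and> (\<forall>x\<in>\<Union>C. x\<noteq>v \<longrightarrow> x\<noteq>w \<longrightarrow> (\<exists>e1\<in>D. \<exists>e2\<in>D. e1\<noteq>e2 \<and> x\<in>e1 \<and> x\<in>e2))"
  using assms
proof (induction D arbitrary: v e0 rule: finite_psubset_induct)
  case (psubset D)
  have e0e: "is_edge e0" using psubset.prems(1,3) by blast
  obtain u where u: "e0 = {v, u}" "u \<noteq> v"
    using edge_other[OF e0e psubset.prems(4)] by blast
  have ue: "u \<in> e0" using u(1) by simp
  show ?case
  proof (cases "\<forall>e\<in>D. u \<in> e \<longrightarrow> e = e0")
    case True
    have cl: "\<forall>e\<in>D. e \<inter> \<Union>{e0} \<noteq> {} \<longrightarrow> e \<in> {e0}"
    proof (intro ballI impI)
      fix e assume e: "e \<in> D" "e \<inter> \<Union>{e0} \<noteq> {}"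
      then have "v \<in> e \<or> u \<in> e" using u by auto
      then show "e \<in> {e0}" using e(1) True psubset.prems(5) by blast
    qed
    have ins: "\<forall>x\<in>\<Union>{e0}. x\<noteq>v \<longrightarrow> x\<noteq>u \<longrightarrow> (\<exists>e1\<in>D. \<exists>e2\<in>D. e1\<noteq>e2 \<and> x\<in>e1 \<and> x\<in>e2)"
      using u by auto
    have un: "\<exists>e\<in>D. u\<in>e \<and> (\<forall>e'\<in>D. u\<in>e' \<longrightarrow> e'=e)"
      using True psubset.prems(3) ue by blast
    show ?thesis
      apply (rule exI[of _ "{e0}"], rule exI[of _ u])
      using cl ins un psubset.prems(3) ue u(2) by simp
  next
    case False
    then obtain f where f: "f \<in> D" "u \<in> f" "f \<noteq> e0" by blast
    define D' where "D' = D - {e0}"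
    have sub: "D' \<subset> D" using psubset.prems(3) by (auto simp: D'_def)
    have fD': "f \<in> D'" using f by (simp add: D'_def)
    have uniq: "\<forall>e\<in>D'. u \<in> e \<longrightarrow> e = f"
      using psubset.prems(2) f psubset.prems(3) ue unfolding deg2_def D'_def by (metis DiffE singletonI)
    have d2: "deg2 D'" using psubset.prems(2) unfolding deg2_def D'_def by (meson DiffD1)
    have ed: "\<forall>e\<in>D'. is_edge e" unfolding D'_def using psubset.prems(1) by blast
    from psubset.IH[OF sub ed d2 fD' f(2) uniq]
    obtain C w where C: "C \<subseteq> D'" "f \<in> C" "\<forall>e\<in>D'. e \<inter> \<Union>C \<noteq> {} \<longrightarrow> e \<in> C" "w \<in> \<Union>C" "w \<noteq> u"
      "\<exists>e\<in>D'. w\<in>e \<and> (\<forall>e'\<in>D'. w\<in>e' \<longrightarrow> e'=e)"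
      "\<forall>x\<in>\<Union>C. x\<noteq>u \<longrightarrow> x\<noteq>w \<longrightarrow> (\<exists>e1\<in>D'. \<exists>e2\<in>D'. e1\<noteq>e2 \<and> x\<in>e1 \<and> x\<in>e2)"
      by (elim exE conjE)
    have vD': "\<forall>e\<in>D'. v \<notin> e" using psubset.prems(5) by (auto simp: D'_def)
    have wv: "w \<noteq> v" using C(1,4) vD' by blast
    show ?thesis
    proof (rule exI[of _ "insert e0 C"], rule exI[of _ w], intro conjI)
      show "insert e0 C \<subseteq> D" using C(1) psubset.prems(3) by (auto simp: D'_def)
      show "e0 \<in> insert e0 C" by simp
      show "\<forall>e\<in>D. e \<inter> \<Union>(insert e0 C) \<noteq> {} \<longrightarrow> e \<in> insert e0 C"
      proof (intro ballI impI)
        fix e assume e: "e \<in> D" "e \<inter> \<Union>(insert e0 C) \<noteq> {}"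
        show "e \<in> insert e0 C"
        proof (cases "e = e0")
          case False
          then have eD': "e \<in> D'" using e by (simp add: D'_def)
          show ?thesis
          proof (cases "e \<inter> \<Union>C = {}")
            case True
            then have "e \<inter> e0 \<noteq> {}" using e by auto
            then have "v \<in> e \<or> u \<in> e" using u by auto
            then have "e = f" using vD' eD' uniq by blast
            then show ?thesis using C(2) by simp
          next
            case False then show ?thesis using C(3) eD' by blast
          qed
        qed simp
      qed
      show "w \<in> \<Union>(insert e0 C)" using C(4) by simp
      show "w \<noteq> v" by (rule wv)
      show "\<exists>e\<in>D. w\<in>e \<and> (\<forall>e'\<in>D. w\<in>e' \<longrightarrow> e'=e)"
      proof -
        obtain e where e: "e \<in> D'" "w \<in> e" "\<forall>e'\<in>D'. w\<in>e' \<longrightarrow> e'=e" using C(6) by blast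
        have "w \<notin> e0" using wv C(5) u by auto
        then show ?thesis using e by (auto simp: D'_def)
      qed
      show "\<forall>x\<in>\<Union>(insert e0 C). x\<noteq>v \<longrightarrow> x\<noteq>w \<longrightarrow> (\<exists>e1\<in>D. \<exists>e2\<in>D. e1\<noteq>e2 \<and> x\<in>e1 \<and> x\<in>e2)"
      proof (intro ballI impI)
        fix x assume x: "x \<in> \<Union>(insert e0 C)" "x \<noteq> v" "x \<noteq> w"
        show "\<exists>e1\<in>D. \<exists>e2\<in>D. e1\<noteq>e2 \<and> x\<in>e1 \<and> x\<in>e2"
        proof (cases "x = u")
          case True then show ?thesis using f psubset.prems(3) ue by blast
        next
          case False
          then have "x \<in> \<Union>C" using x u by auto
          then obtain e1 e2 where ee: "e1 \<in> D'" "e2 \<in> D'" "e1 \<noteq> e2" "x \<in> e1" "x \<in> e2"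
            using C(7) False x(3) by blast
          then show ?thesis unfolding D'_def by blast
        qed
      qed
    qed
  qed
qed


lemma flip:
  assumes m1: "\<forall>e\<in>M1. \<forall>e'\<in>M1. e\<noteq>e' \<longrightarrow> e\<inter>e'={}"
    and m2: "\<forall>e\<in>M2. \<forall>e'\<in>M2. e\<noteq>e' \<longrightarrow> e\<inter>e'={}"
    and CD: "C \<subseteq> (M1-M2)\<union>(M2-M1)"
    and cl: "\<forall>e\<in>(M1-M2)\<union>(M2-M1). e \<inter> \<Union>C \<noteq> {} \<longrightarrow> e \<in> C"
  shows "\<forall>e\<in>(M2-C)\<union>(M1\<inter>C). \<forall>e'\<in>(M2-C)\<union>(M1\<inter>C). e\<noteq>e' \<longrightarrow> e\<inter>e'={}"
    and "\<Union>((M2-C)\<union>(M1\<inter>C)) = (\<Union>M2 - \<Union>C) \<union> (\<Union>M1 \<inter> \<Union>C)"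
proof -
  show "\<forall>e\<in>(M2-C)\<union>(M1\<inter>C). \<forall>e'\<in>(M2-C)\<union>(M1\<inter>C). e\<noteq>e' \<longrightarrow> e\<inter>e'={}"
  proof (intro ballI impI)
    fix e e' assume e: "e \<in> (M2-C)\<union>(M1\<inter>C)" "e' \<in> (M2-C)\<union>(M1\<inter>C)" "e \<noteq> e'"
    have key: "a \<inter> b = {}" if a: "a \<in> M2 - C" and b: "b \<in> M1 \<inter> C" for a b
    proof (rule ccontr)
      assume ne: "a \<inter> b \<noteq> {}"
      show False
      proof (cases "a \<in> M1")
        case True then have "a = b" using m1 b ne by blast
        then show False using a b by simp
      next
        case False
        then have "a \<in> (M1-M2)\<union>(M2-M1)" using a by simp
        moreover have "a \<inter> \<Union>C \<noteq> {}" using ne b by blast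
        ultimately show False using cl a by blast
      qed
    qed
    show "e \<inter> e' = {}" using e m1 m2 key[of e e'] key[of e' e] by blast
  qed
  show "\<Union>((M2-C)\<union>(M1\<inter>C)) = (\<Union>M2 - \<Union>C) \<union> (\<Union>M1 \<inter> \<Union>C)"
  proof (rule set_eqI, rule iffI)
    fix x assume "x \<in> \<Union>((M2-C)\<union>(M1\<inter>C))"
    then obtain g where g: "g \<in> (M2-C)\<union>(M1\<inter>C)" "x \<in> g" by blast
    show "x \<in> (\<Union>M2 - \<Union>C) \<union> (\<Union>M1 \<inter> \<Union>C)"
    proof (cases "g \<in> M1 \<inter> C")
      case True then show ?thesis using g by blast
    next
      case False
      then have gM2: "g \<in> M2" "g \<notin> C" using g by auto
      have "x \<notin> \<Union>C"
      proof
        assume "x \<in> \<Union>C"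
        then obtain h where h: "h \<in> C" "x \<in> h" by blast
        show False
        proof (cases "g \<in> M1")
          case True
          have "h \<in> M1 \<or> h \<in> M2" using h CD by blast
          then have "h = g" using m1 m2 True gM2 h g by blast
          then show False using h gM2 by simp
        next
          case False
          then have "g \<in> (M1-M2)\<union>(M2-M1)" using gM2 by simp
          then show False using cl gM2 h g by blast
        qed
      qed
      then show ?thesis using gM2 g by blast
    qed
  next
    fix x assume x: "x \<in> (\<Union>M2 - \<Union>C) \<union> (\<Union>M1 \<inter> \<Union>C)"
    show "x \<in> \<Union>((M2-C)\<union>(M1\<inter>C))"
    proof (cases "x \<in> \<Union>C")
      case False
      then obtain g where "g \<in> M2" "x \<in> g" using x by blast
      then show ?thesis using False by blast
    next
      case True
      then obtain h where h: "h \<in> C" "x \<in> h" by blast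
      obtain g where g: "g \<in> M1" "x \<in> g" using x True by blast
      show ?thesis
      proof (cases "g \<in> M2")
        case False
        then have "g \<in> (M1-M2)\<union>(M2-M1)" using g by simp
        then have "g \<in> C" using cl h g by blast
        then show ?thesis using g by blast
      next
        case True
        have "h \<in> M1 \<or> h \<in> M2" using h CD by blast
        then have "h = g" using m1 m2 True g h by blast
        then show ?thesis using h g by blast
      qed
    qed
  qed
qed

lemma owned_swap_gt:
  assumes "finite A" "v \<notin> A" "w \<in> A" "own v \<noteq> own w"
  shows "card (owned own A (own v)) < card (owned own (insert v (A-{w})) (own v))"
proof (rule psubset_card_mono)
  show "finite (owned own (insert v (A-{w})) (own v))" using assms by (simp add: owned_def)
  show "owned own A (own v) \<subset> owned own (insert v (A-{w})) (own v)"
    using assms by (auto simp: owned_def)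
qed

lemma owned_swap_ge:
  assumes "finite A" "q \<noteq> own w"
  shows "card (owned own A q) \<le> card (owned own (insert v (A-{w})) q)"
proof (rule card_mono)
  show "finite (owned own (insert v (A-{w})) q)" using assms by (simp add: owned_def)
  show "owned own A q \<subseteq> owned own (insert v (A-{w})) q"
    using assms by (auto simp: owned_def)
qed

lemma owned_swap_eq:
  assumes "finite A" "v \<notin> A" "w \<in> A" "own v = own w"
  shows "card (owned own (insert v (A-{w})) q) = card (owned own A q)"
proof (cases "q = own v")
  case True
  have "owned own (insert v (A-{w})) q = insert v (owned own A q - {w})"
    using assms True by (auto simp: owned_def)
  moreover have "w \<in> owned own A q" using assms True by (simp add: owned_def)
  moreover have "finite (owned own A q)" using assms by (simp add: owned_def)
  moreover have "v \<notin> owned own A q" using assms by (simp add: owned_def)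
  ultimately show ?thesis by (metis card_Suc_Diff1 card_insert_disjoint finite_Diff Diff_iff)
next
  case False
  then show ?thesis using assms by (auto simp: owned_def intro!: arg_cong[where f=card])
qed

lemma lex_contra:
  assumes "lex_geq N own R M M'" "q0 \<in> N" "cov own M' q0 > cov own M q0"
    "\<forall>q\<in>N. cov own M q > cov own M' q \<longrightarrow> prior own R q0 q"
  shows False
  using assms unfolding lex_geq_def by (metis less_irrefl)

lemma prior_total:
  assumes "r \<noteq> p" "\<not> prior own R r p" shows "prior own R p r"
  using assms unfolding prior_def by auto


lemma setcalc_b:
  assumes iv: "\<And>x. x \<in> UC \<Longrightarrow> x \<noteq> v \<Longrightarrow> x \<noteq> w \<Longrightarrow> x \<in> A \<and> x \<in> B"
    and "v \<in> A" "v \<notin> B" "v \<in> UC" "w \<in> A" "w \<notin> B" "w \<in> UC"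
  shows "(B - UC) \<union> (A \<inter> UC) = insert v (insert w B)"
proof (rule set_eqI)
  fix x show "x \<in> (B - UC) \<union> (A \<inter> UC) \<longleftrightarrow> x \<in> insert v (insert w B)"
    using assms iv[of x] by (cases "x \<in> UC") auto
qed
lemma setcalc_a:
  assumes iv: "\<And>x. x \<in> UC \<Longrightarrow> x \<noteq> v \<Longrightarrow> x \<noteq> w \<Longrightarrow> x \<in> A \<and> x \<in> B"
    and "v \<in> A" "v \<notin> B" "v \<in> UC" "w \<in> B" "w \<notin> A" "w \<in> UC"
  shows "(B - UC) \<union> (A \<inter> UC) = insert v (B - {w})"
    and "(A - UC) \<union> (B \<inter> UC) = insert w (A - {v})"
proof -
  show "(B - UC) \<union> (A \<inter> UC) = insert v (B - {w})"
  proof (rule set_eqI)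
    fix x show "x \<in> (B - UC) \<union> (A \<inter> UC) \<longleftrightarrow> x \<in> insert v (B - {w})"
      using assms iv[of x] by (cases "x \<in> UC") auto
  qed
  show "(A - UC) \<union> (B \<inter> UC) = insert w (A - {v})"
  proof (rule set_eqI)
    fix x show "x \<in> (A - UC) \<union> (B \<inter> UC) \<longleftrightarrow> x \<in> insert w (A - {v})"
      using assms iv[of x] by (cases "x \<in> UC") auto
  qed
qed

lemma card_swap: "finite A \<Longrightarrow> w \<in> A \<Longrightarrow> v \<notin> A \<Longrightarrow> card (insert v (A - {w})) = card A"
  by (metis card_Suc_Diff1 card_insert_disjoint finite_Diff DiffD1)

lemma core:
  assumes fin: "finite H2" and sub: "H \<subseteq> H2" and edg: "\<forall>e\<in>H2. is_edge e"
    and own_in: "\<forall>e\<in>H2. \<forall>x\<in>e. own x \<in> N"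
    and HS: "\<forall>e\<in>H. e \<inter> S = {}" and H2S: "\<forall>e\<in>H2. e \<inter> S = {} \<longrightarrow> e \<in> H"
    and Sp: "\<forall>x\<in>S. own x = p"
    and pri: "\<forall>r. prior own R2 r p \<longrightarrow> prior own R1 r p"
    and M1: "ia_rule N own R1 H M1" and pN: "p \<in> N"
  shows "max_matching_of H2 M2 \<Longrightarrow> (\<forall>M'. max_matching_of H2 M' \<longrightarrow> lex_geq N own R2 M2 M')
     \<Longrightarrow> cov own M1 p \<le> cov own M2 p"
proof (induction "card ((M1 - M2) \<union> (M2 - M1))" arbitrary: M2 rule: less_induct)
  case less
  note M2max = less.prems(1) and M2lex = less.prems(2)
  have M1max: "max_matching_of H M1" and M1lex: "\<forall>M'. max_matching_of H M' \<longrightarrow> lex_geq N own R1 M1 M'"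
    using M1 by (auto simp: ia_rule_def)
  have M1H: "M1 \<subseteq> H" and m1: "\<forall>e\<in>M1. \<forall>e'\<in>M1. e\<noteq>e' \<longrightarrow> e\<inter>e'={}"
    using M1max by (auto simp: max_matching_of_def matching_of_def)
  have M2H: "M2 \<subseteq> H2" and m2: "\<forall>e\<in>M2. \<forall>e'\<in>M2. e\<noteq>e' \<longrightarrow> e\<inter>e'={}"
    using M2max by (auto simp: max_matching_of_def matching_of_def)
  have M1H2: "M1 \<subseteq> H2" using M1H sub by blast
  have finE: "\<forall>e\<in>H2. finite e" using edg by (auto simp: is_edge_def)
  have finU1: "finite (\<Union>M1)" using M1H2 fin finE by (meson finite_Union finite_subset subsetD)
  have finU2: "finite (\<Union>M2)" using M2H fin finE by (meson finite_Union rev_finite_subset subsetD)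
  have finH: "finite H" using sub fin by (rule finite_subset)
  have edgH: "\<forall>e\<in>H. is_edge e" using sub edg by blast
  have card1: "card (\<Union>M1) = 2 * card M1"
    using matching_card[of H M1] M1max finH edgH by (simp add: max_matching_of_def)
  have card2: "card (\<Union>M2) = 2 * card M2"
    using matching_card[of H2 M2] M2max fin edg by (simp add: max_matching_of_def)
  show ?case
  proof (rule ccontr)
    assume "\<not> ?case"
    hence lt: "cov own M2 p < cov own M1 p" by simp
    have "\<not> owned own (\<Union>M1) p \<subseteq> owned own (\<Union>M2) p"
    proof
      assume "owned own (\<Union>M1) p \<subseteq> owned own (\<Union>M2) p"
      then have "cov own M1 p \<le> cov own M2 p" unfolding cov_def
        by (rule card_mono[rotated]) (rule finite_subset[OF _ finU2], auto simp: owned_def)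
      then show False using lt by simp
    qed
    then obtain v where v: "v \<in> \<Union>M1" "v \<notin> \<Union>M2" "own v = p" by (auto simp: owned_def)
    then obtain e0 where e0: "e0 \<in> M1" "v \<in> e0" by blast
    define D where "D = (M1 - M2) \<union> (M2 - M1)"
    have finD: "finite D" unfolding D_def using M1H2 M2H fin by (meson finite_Diff finite_UnI finite_subset)
    have edD: "\<forall>e\<in>D. is_edge e" unfolding D_def using M1H2 M2H edg by blast
    have d2: "deg2 D" unfolding D_def by (rule deg2_symdiff[OF m1 m2])
    have e0D: "e0 \<in> D" unfolding D_def using e0 v by blast
    have vuniq: "\<forall>e\<in>D. v\<in>e \<longrightarrow> e = e0" unfolding D_def using e0 v m1 by blast
    from path_comp[OF finD edD d2 e0D e0(2) vuniq]
    obtain C w where C: "C \<subseteq> D" "e0 \<in> C" "\<forall>e\<in>D. e \<inter> \<Union>C \<noteq> {} \<longrightarrow> e \<in> C" "w \<in> \<Union>C" "w \<noteq> v"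
      "\<exists>e\<in>D. w\<in>e \<and> (\<forall>e'\<in>D. w\<in>e' \<longrightarrow> e'=e)"
      "\<forall>x\<in>\<Union>C. x\<noteq>v \<longrightarrow> x\<noteq>w \<longrightarrow> (\<exists>e1\<in>D. \<exists>e2\<in>D. e1\<noteq>e2 \<and> x\<in>e1 \<and> x\<in>e2)"
      by (elim exE conjE)
    have vC: "v \<in> \<Union>C" using C(2) e0 by blast
    have inner: "\<forall>x\<in>\<Union>C. x\<noteq>v \<longrightarrow> x\<noteq>w \<longrightarrow> x \<in> \<Union>M1 \<and> x \<in> \<Union>M2"
    proof (intro ballI impI)
      fix x assume "x \<in> \<Union>C" "x \<noteq> v" "x \<noteq> w"
      then obtain e1 e2 where "e1\<in>D" "e2\<in>D" "e1\<noteq>e2" "x\<in>e1" "x\<in>e2" using C(7) by blast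
      then show "x \<in> \<Union>M1 \<and> x \<in> \<Union>M2" unfolding D_def using two_edges[OF m1 m2] by blast
    qed
    have innerD: "\<And>x. x \<in> \<Union>C \<Longrightarrow> x \<noteq> v \<Longrightarrow> x \<noteq> w \<Longrightarrow> x \<in> \<Union>M1 \<and> x \<in> \<Union>M2"
      using inner by blast
    obtain ew where ew: "ew \<in> D" "w \<in> ew" "\<forall>e'\<in>D. w\<in>e' \<longrightarrow> e'=ew" using C(6) by blast
    have wcases: "(w \<in> \<Union>M1 \<and> w \<notin> \<Union>M2) \<or> (w \<in> \<Union>M2 \<and> w \<notin> \<Union>M1)"
    proof (cases "ew \<in> M1")
      case True
      then have "ew \<notin> M2" using ew(1) by (simp add: D_def)
      have "w \<notin> \<Union>M2"
      proof
        assume "w \<in> \<Union>M2"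
        then obtain g where g: "g \<in> M2" "w \<in> g" by blast
        show False
        proof (cases "g \<in> M1")
          case True then have "g = ew" using m1 \<open>ew \<in> M1\<close> g ew by blast
          then show False using g \<open>ew \<notin> M2\<close> by simp
        next
          case False then have "g \<in> D" using g by (simp add: D_def)
          then have "g = ew" using ew g by blast
          then show False using g \<open>ew \<notin> M2\<close> by simp
        qed
      qed
      then show ?thesis using True ew by blast
    next
      case False
      then have "ew \<in> M2" using ew(1) by (simp add: D_def)
      have "w \<notin> \<Union>M1"
      proof
        assume "w \<in> \<Union>M1"
        then obtain g where g: "g \<in> M1" "w \<in> g" by blast
        show False
        proof (cases "g \<in> M2")
          case True then have "g = ew" using m2 \<open>ew \<in> M2\<close> g ew by blast
          then show False using g False by simp
        next
          case False then have "g \<in> D" using g by (simp add: D_def)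
          then have "g = ew" using ew g by blast
          then show False using g \<open>ew \<notin> M1\<close> by simp
        qed
      qed
      then show ?thesis using \<open>ew \<in> M2\<close> ew by blast
    qed
    have CD': "C \<subseteq> (M1-M2)\<union>(M2-M1)" using C(1) by (simp add: D_def)
    have cl': "\<forall>e\<in>(M1-M2)\<union>(M2-M1). e \<inter> \<Union>C \<noteq> {} \<longrightarrow> e \<in> C" using C(3) by (simp add: D_def)
    define N2 where "N2 = (M2 - C) \<union> (M1 \<inter> C)"
    have N2m: "matching_of H2 N2"
      using flip(1)[OF m1 m2 CD' cl'] M1H2 M2H unfolding N2_def matching_of_def by blast
    have N2U: "\<Union>N2 = (\<Union>M2 - \<Union>C) \<union> (\<Union>M1 \<inter> \<Union>C)"
      using flip(2)[OF m1 m2 CD' cl'] unfolding N2_def .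
    have cardN2: "card (\<Union>N2) = 2 * card N2" using matching_card[OF N2m fin edg] .
    show False
    proof (cases "w \<in> \<Union>M1 \<and> w \<notin> \<Union>M2")
      case True
      have "\<Union>N2 = insert v (insert w (\<Union>M2))"
        unfolding N2U using setcalc_b[OF innerD v(1) v(2) vC _ _ C(4)] True by blast
      then have "card (\<Union>N2) = card (\<Union>M2) + 2"
        using finU2 True v C(5) by simp
      then have "card N2 > card M2" using card2 cardN2 by simp
      then show False using M2max N2m by (auto simp: max_matching_of_def)
    next
      case False
      then have w: "w \<in> \<Union>M2" "w \<notin> \<Union>M1" using wcases by blast+
      have N2U': "\<Union>N2 = insert v (\<Union>M2 - {w})"
        unfolding N2U using setcalc_a(1)[OF innerD v(1) v(2) vC w(1) w(2) C(4)] .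
      have "card (\<Union>N2) = card (\<Union>M2)"
        unfolding N2U' using card_swap[OF finU2 w(1) v(2)] .
      then have cN2: "card N2 = card M2" using card2 cardN2 by simp
      have N2max: "max_matching_of H2 N2"
        using N2m M2max cN2 by (simp add: max_matching_of_def)
      have covN2: "cov own N2 q = card (owned own (insert v (\<Union>M2 - {w})) q)" for q
        by (simp add: cov_def N2U')
      show False
      proof (cases "own w = p")
        case True
        have eqc: "cov own N2 q = cov own M2 q" for q
          using covN2[of q] owned_swap_eq[OF finU2 v(2) w(1), where own=own and q=q] True v(3) by (simp add: cov_def)
        have "cov own N2 = cov own M2" using eqc by (rule ext)
        then have N2lex: "\<forall>M'. max_matching_of H2 M' \<longrightarrow> lex_geq N own R2 N2 M'"
          using M2lex unfolding lex_geq_def by simp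
        have "(M1 - N2) \<union> (N2 - M1) = D - C" unfolding N2_def D_def using C(1) D_def by blast
        moreover have "card (D - C) < card D"
          using C(1,2) finD by (intro psubset_card_mono) auto
        ultimately have "card ((M1 - N2) \<union> (N2 - M1)) < card ((M1 - M2) \<union> (M2 - M1))"
          by (simp add: D_def)
        then have "cov own M1 p \<le> cov own N2 p" using less.hyps N2max N2lex by blast
        then show False using lt eqc by simp
      next
        case wp: False
        show False
        proof (cases "prior own R2 (own w) p")
          case True
          then have pr1: "prior own R1 (own w) p" using pri by blast
          define N1 where "N1 = (M1 - C) \<union> (M2 \<inter> C)"
          have CD'': "C \<subseteq> (M2-M1)\<union>(M1-M2)" using CD' by blast
          have cl'': "\<forall>e\<in>(M2-M1)\<union>(M1-M2). e \<inter> \<Union>C \<noteq> {} \<longrightarrow> e \<in> C" using cl' by blast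
          have N1U: "\<Union>N1 = (\<Union>M1 - \<Union>C) \<union> (\<Union>M2 \<inter> \<Union>C)"
            using flip(2)[OF m2 m1 CD'' cl''] unfolding N1_def .
          have N1U': "\<Union>N1 = insert w (\<Union>M1 - {v})"
            unfolding N1U using setcalc_a(2)[OF innerD v(1) v(2) vC w(1) w(2) C(4)] .
          have CS: "\<Union>C \<inter> S = {}"
          proof -
            have "x \<notin> S" if "x \<in> \<Union>C" for x
            proof (cases "x = w")
              case True then show ?thesis using wp Sp by blast
            next
              case False
              then have "x \<in> \<Union>M1" using innerD[OF that _ False] v(1) by (cases "x = v") auto
              then show ?thesis using M1H HS by blast
            qed
            then show ?thesis by blast
          qed
          have N1H: "N1 \<subseteq> H"
          proof
            fix e assume "e \<in> N1"
            then show "e \<in> H"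
            proof (cases "e \<in> M1")
              case False
              then have "e \<in> M2" "e \<in> C" using \<open>e \<in> N1\<close> by (auto simp: N1_def)
              then have "e \<inter> S = {}" using CS by blast
              then show ?thesis using H2S M2H \<open>e \<in> M2\<close> by blast
            qed (use M1H in blast)
          qed
          have N1m: "matching_of H N1"
            using flip(1)[OF m2 m1 CD'' cl''] N1H unfolding N1_def matching_of_def by blast
          have "card (\<Union>N1) = card (\<Union>M1)"
            unfolding N1U' using card_swap[OF finU1 v(1) w(2)] .
          moreover have "card (\<Union>N1) = 2 * card N1" using matching_card[OF N1m finH edgH] .
          ultimately have "card N1 = card M1" using card1 by simp
          then have N1max: "max_matching_of H N1"
            using N1m M1max by (simp add: max_matching_of_def)
          then have lg: "lex_geq N own R1 M1 N1" using M1lex by blast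
          have wN: "own w \<in> N" using own_in M2H w(1) by blast
          have covN1: "cov own N1 q = card (owned own (insert w (\<Union>M1 - {v})) q)" for q
            by (simp add: cov_def N1U')
          have g1: "cov own N1 (own w) > cov own M1 (own w)"
            using covN1[of "own w"] owned_swap_gt[OF finU1 w(2) v(1), where own=own] wp v(3) by (simp add: cov_def)
          have g2: "\<forall>q\<in>N. cov own M1 q > cov own N1 q \<longrightarrow> prior own R1 (own w) q"
          proof (intro ballI impI)
            fix q assume "q \<in> N" "cov own M1 q > cov own N1 q"
            then show "prior own R1 (own w) q"
            proof (cases "q = p")
              case False
              then have "card (owned own (\<Union>M1) q) \<le> card (owned own (insert w (\<Union>M1 - {v})) q)"
                using owned_swap_ge[OF finU1, where q=q and own=own and w=v and v=w] v(3) by simp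
              then show ?thesis using \<open>cov own M1 q > cov own N1 q\<close> covN1[of q] by (simp add: cov_def)
            qed (use pr1 in simp)
          qed
          show False using lex_contra[OF lg wN g1 g2] .
        next
          case False
          then have pr: "prior own R2 p (own w)" using prior_total wp by metis
          have lg: "lex_geq N own R2 M2 N2" using M2lex N2max by blast
          have g1: "cov own N2 p > cov own M2 p"
            using covN2[of p] owned_swap_gt[OF finU2 v(2) w(1), where own=own] wp v(3) by (simp add: cov_def)
          have g2: "\<forall>q\<in>N. cov own M2 q > cov own N2 q \<longrightarrow> prior own R2 p q"
          proof (intro ballI impI)
            fix q assume "q \<in> N" "cov own M2 q > cov own N2 q"
            then show "prior own R2 p q"
            proof (cases "q = own w")
              case False
              then have "card (owned own (\<Union>M2) q) \<le> card (owned own (insert v (\<Union>M2 - {w})) q)"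
                using owned_swap_ge[OF finU2, where q=q and own=own and w=w and v=v] by simp
              then show ?thesis using \<open>cov own M2 q > cov own N2 q\<close> covN2[of q] by (simp add: cov_def)
            qed (use pr in simp)
          qed
          show False using lex_contra[OF lg pN g1 g2] .
        qed
      qed
    qed
  qed
qed


lemma util_cov:
  assumes cr: "\<forall>e\<in>M. \<forall>u\<in>e. \<forall>w\<in>e. u\<noteq>w \<longrightarrow> own u \<noteq> own w"
    and dj: "\<forall>e\<in>M. \<forall>e'\<in>M. e\<noteq>e' \<longrightarrow> e\<inter>e'={}"
  shows "card {e\<in>M. \<exists>v\<in>e. own v = q} = cov own M q"
proof -
  define A where "A = {e\<in>M. \<exists>v\<in>e. own v = q}"
  define g where "g e = (THE v. v \<in> e \<and> own v = q)" for e
  have ex1: "\<exists>!v. v \<in> e \<and> own v = q" if eA: "e \<in> A" for e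
  proof -
    obtain v where v: "v \<in> e" "own v = q" using eA unfolding A_def by blast
    have e: "e \<in> M" using eA unfolding A_def by blast
    show ?thesis
    proof (rule ex1I[of _ v])
      show "v \<in> e \<and> own v = q" using v by simp
      fix y assume "y \<in> e \<and> own y = q"
      then show "y = v" using cr e v by metis
    qed
  qed
  have gp: "g e \<in> e \<and> own (g e) = q" if "e \<in> A" for e
    unfolding g_def using theI'[OF ex1[OF that]] .
  have inj: "inj_on g A"
  proof (rule inj_onI)
    fix e1 e2 assume "e1 \<in> A" "e2 \<in> A" "g e1 = g e2"
    then have "e1 \<in> M" "e2 \<in> M" "g e1 \<in> e1" "g e1 \<in> e2" using gp[of e1] gp[of e2] unfolding A_def by auto
    then show "e1 = e2" using dj by blast
  qed
  have img: "g ` A = owned own (\<Union>M) q"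
  proof
    show "g ` A \<subseteq> owned own (\<Union>M) q" using gp unfolding A_def owned_def by blast
    show "owned own (\<Union>M) q \<subseteq> g ` A"
    proof
      fix x assume "x \<in> owned own (\<Union>M) q"
      then obtain e where e: "e \<in> M" "x \<in> e" "own x = q" by (auto simp: owned_def)
      then have eA: "e \<in> A" unfolding A_def by blast
      then have "g e = x" using gp[OF eA] e ex1[OF eA] by blast
      then show "x \<in> g ` A" using eA by blast
    qed
  qed
  show ?thesis using card_image[OF inj] img unfolding cov_def A_def by simp
qed

theorem lemma1:
  fixes N :: "'p::linorder set" and own :: "'v \<Rightarrow> 'p" and V :: "'v set"
    and Ein :: "'p \<Rightarrow> 'v set set" and EI :: "'v set set"
    and IA :: "'v set \<Rightarrow> 'v set set \<Rightarrow> 'v set set"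
    and p :: 'p and Mo :: "'p \<Rightarrow> 'v set set" and V' :: "'v set"
  assumes "finite N" and "finite V" and "own ` V \<subseteq> N"
    and "\<And>q e. q \<in> N \<Longrightarrow> e \<in> Ein q \<Longrightarrow> is_edge e \<and> e \<subseteq> owned own V q"
    and "\<And>e. e \<in> EI \<Longrightarrow> is_edge e \<and> e \<subseteq> V \<and> (\<forall>u\<in>e. \<forall>w\<in>e. u \<noteq> w \<longrightarrow> own u \<noteq> own w)"
    and IA_rule: "\<And>R F. R \<subseteq> V \<Longrightarrow> F \<subseteq> {e \<in> EI. e \<subseteq> R} \<Longrightarrow> ia_rule N own R F (IA R F)"
    and "p \<in> N"
    and "\<And>q. q \<in> N \<Longrightarrow> q \<noteq> p \<Longrightarrow> matching_of (Ein q) (Mo q)"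
    and "V' \<subseteq> owned own V p"
  shows "best_utility N own EI IA V (Ein p) Mo p \<ge>
           2 * nu {e \<in> Ein p. e \<subseteq> V'}
           + best_utility N own EI IA (V - V') {e \<in> Ein p. e \<inter> V' = {}} Mo p"
proof -
  note Ein = assms(4) and EIa = assms(5) and pN = assms(7) and V'p = assms(9)
  have finEin: "finite (Ein p)"
  proof (rule finite_subset)
    show "Ein p \<subseteq> Pow V" using Ein[OF pN] by (auto simp: owned_def)
  qed (use assms(2) in simp)
  have finEI: "finite EI"
  proof (rule finite_subset)
    show "EI \<subseteq> Pow V" using EIa by auto
  qed (use assms(2) in simp)
  have finM: "finite {M. matching_of F M}" if "finite F" for F :: "'v set set"
    by (rule finite_subset[of _ "Pow F"]) (use that in \<open>auto simp: matching_of_def\<close>)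
  have emp: "matching_of F {}" for F :: "'v set set" by (simp add: matching_of_def)
  define Fh where "Fh = {e \<in> Ein p. e \<inter> V' = {}}"
  define Fv where "Fv = {e \<in> Ein p. e \<subseteq> V'}"
  have finFh: "finite Fh" using finEin by (simp add: Fh_def)
  have finFv: "finite Fv" using finEin by (simp add: Fv_def)
  define uh where "uh Mp = utility N own EI IA (V - V') (Mo(p := Mp)) p" for Mp
  have "best_utility N own EI IA (V - V') Fh Mo p \<in> uh ` {Mp. matching_of Fh Mp}"
    unfolding best_utility_def uh_def[symmetric]
    by (rule Max_in) (use finM[OF finFh] emp in auto)
  then obtain Mh where Mh: "matching_of Fh Mh" "best_utility N own EI IA (V - V') Fh Mo p = uh Mh" by auto
  have "nu Fv \<in> card ` {M. matching_of Fv M}"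
    unfolding nu_def by (rule Max_in) (use finM[OF finFv] emp in auto)
  then obtain Mv where Mv: "matching_of Fv Mv" "card Mv = nu Fv" by auto
  have MhFh: "Mh \<subseteq> Fh" and MvFv: "Mv \<subseteq> Fv" using Mh Mv by (auto simp: matching_of_def)
  have isE: "is_edge e" if "e \<in> Ein p" for e using Ein[OF pN that] by simp
  have UMv: "\<Union>Mv \<subseteq> V'" using MvFv by (auto simp: Fv_def)
  have dis: "Mh \<inter> Mv = {}"
  proof (rule ccontr)
    assume "Mh \<inter> Mv \<noteq> {}"
    then obtain e where e: "e \<in> Mh" "e \<in> Mv" by blast
    then have "e \<inter> V' = {}" "e \<subseteq> V'" "e \<in> Ein p" using MhFh MvFv by (auto simp: Fh_def Fv_def)
    then have "e = {}" by blast
    then show False using isE[OF \<open>e \<in> Ein p\<close>] by (auto simp: is_edge_def)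
  qed
  have MhvM: "matching_of (Ein p) (Mh \<union> Mv)"
  proof -
    have "Mh \<union> Mv \<subseteq> Ein p" using MhFh MvFv by (auto simp: Fh_def Fv_def)
    moreover have cr: "e \<inter> e' = {}" if "e \<in> Mh" "e' \<in> Mv" for e e'
      using that MhFh MvFv by (auto simp: Fh_def Fv_def)
    moreover have mh: "\<And>e e'. e \<in> Mh \<Longrightarrow> e' \<in> Mh \<Longrightarrow> e \<noteq> e' \<Longrightarrow> e \<inter> e' = {}"
      using Mh(1) unfolding matching_of_def by blast
    moreover have mv: "\<And>e e'. e \<in> Mv \<Longrightarrow> e' \<in> Mv \<Longrightarrow> e \<noteq> e' \<Longrightarrow> e \<inter> e' = {}"
      using Mv(1) unfolding matching_of_def by blast
    ultimately show ?thesis unfolding matching_of_def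
    proof (intro conjI ballI impI)
      fix e e' assume "e \<in> Mh \<union> Mv" "e' \<in> Mh \<union> Mv" "e \<noteq> e'"
      then show "e \<inter> e' = {}"
        using mh[of e e'] mv[of e e'] cr[of e e'] cr[of e' e] by (auto simp: Int_commute)
    qed simp
  qed
  have cardMhv: "card (Mh \<union> Mv) = card Mh + card Mv"
    by (rule card_Un_disjoint) (use finFh finFv MhFh MvFv dis finite_subset in auto)
  define U' where "U' = (\<Union>q\<in>N. \<Union>((Mo(p := Mh)) q))"
  define U where "U = (\<Union>q\<in>N. \<Union>((Mo(p := Mh \<union> Mv)) q))"
  have Ueq: "(\<Union>q\<in>N. \<Union>((Mo(p := X)) q)) = \<Union>X \<union> (\<Union>q\<in>N-{p}. \<Union>(Mo q))" for X
  proof -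
    have "(\<Union>q\<in>N. \<Union>((Mo(p := X)) q)) = \<Union>((Mo(p := X)) p) \<union> (\<Union>q\<in>N-{p}. \<Union>((Mo(p := X)) q))"
      using pN by (metis insert_Diff UN_insert)
    also have "(\<Union>q\<in>N-{p}. \<Union>((Mo(p := X)) q)) = (\<Union>q\<in>N-{p}. \<Union>(Mo q))"
      by (rule SUP_cong) auto
    finally show ?thesis by simp
  qed
  have UU: "U = U' \<union> \<Union>Mv" unfolding U_def U'_def Ueq by auto
  define H where "H = available EI (V - V') U'"
  define H2 where "H2 = available EI V U"
  define M1 where "M1 = IA (V - V') H"
  define M2 where "M2 = IA V H2"
  have ia1: "ia_rule N own (V - V') H M1" unfolding M1_def
    by (rule IA_rule) (auto simp: H_def available_def)
  have ia2: "ia_rule N own V H2 M2" unfolding M2_def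
    by (rule IA_rule) (auto simp: H2_def available_def)
  have V'own: "\<forall>x\<in>V'. own x = p" using V'p by (auto simp: owned_def)
  have pri: "\<forall>r. prior own V r p \<longrightarrow> prior own (V - V') r p"
  proof (intro allI impI)
    fix r assume pr: "prior own V r p"
    then have rp: "r \<noteq> p" by (auto simp: prior_def)
    have "owned own (V - V') r = owned own V r" using rp V'own by (auto simp: owned_def)
    moreover have "card (owned own (V - V') p) \<le> card (owned own V p)"
      by (rule card_mono) (use assms(2) in \<open>auto simp: owned_def\<close>)
    ultimately show "prior own (V - V') r p" using pr unfolding prior_def by auto
  qed
  have c: "cov own M1 p \<le> cov own M2 p"
  proof (rule core[of H2 H own N V' p V "V - V'" M1 M2])
    show "finite H2" using finEI by (auto simp: H2_def available_def)
    show "H \<subseteq> H2" using UU UMv by (auto simp: H_def H2_def available_def)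
    show "\<forall>e\<in>H2. is_edge e" using EIa by (auto simp: H2_def available_def)
    show "\<forall>e\<in>H2. \<forall>x\<in>e. own x \<in> N" using EIa assms(3) by (fastforce simp: H2_def available_def)
    show "\<forall>e\<in>H. e \<inter> V' = {}" by (auto simp: H_def available_def)
    show "\<forall>e\<in>H2. e \<inter> V' = {} \<longrightarrow> e \<in> H" using UU by (auto simp: H_def H2_def available_def)
    show "\<forall>x\<in>V'. own x = p" by (rule V'own)
    show "\<forall>r. prior own V r p \<longrightarrow> prior own (V - V') r p" by (rule pri)
    show "ia_rule N own (V - V') H M1" by (rule ia1)
    show "p \<in> N" by (rule pN)
    show "max_matching_of H2 M2" using ia2 by (simp add: ia_rule_def)
    show "\<forall>M'. max_matching_of H2 M' \<longrightarrow> lex_geq N own V M2 M'" using ia2 by (simp add: ia_rule_def)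
  qed
  have uc: "card {e\<in>M. \<exists>v\<in>e. own v = p} = cov own M p" if "M \<subseteq> EI" "matching_of F M" for M F
    by (rule util_cov) (use that EIa in \<open>auto simp: matching_of_def\<close>)
  have M1EI: "M1 \<subseteq> EI" "matching_of H M1" using ia1
    by (auto simp: ia_rule_def max_matching_of_def matching_of_def H_def available_def)
  have M2EI: "M2 \<subseteq> EI" "matching_of H2 M2" using ia2
    by (auto simp: ia_rule_def max_matching_of_def matching_of_def H2_def available_def)
  have M1e: "IA (V - V') (available EI (V - V') (\<Union>q\<in>N. \<Union>((Mo(p := Mh)) q))) = M1"
    by (simp only: M1_def H_def U'_def)
  have M2e: "IA V (available EI V (\<Union>q\<in>N. \<Union>((Mo(p := Mh \<union> Mv)) q))) = M2"
    by (simp only: M2_def H2_def U_def)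
  have uhv: "uh Mh = 2 * card Mh + cov own M1 p"
    unfolding uh_def utility_def M1e using uc[OF M1EI] by simp
  have ufull: "utility N own EI IA V (Mo(p := Mh \<union> Mv)) p = 2 * card (Mh \<union> Mv) + cov own M2 p"
    unfolding utility_def M2e using uc[OF M2EI] by simp
  have "utility N own EI IA V (Mo(p := Mh \<union> Mv)) p \<le> best_utility N own EI IA V (Ein p) Mo p"
    unfolding best_utility_def by (rule Max_ge) (use finM[OF finEin] MhvM in auto)
  then show ?thesis using ufull cardMhv Mv(2) c uhv Mh(2) unfolding Fv_def Fh_def by simp
qed

end
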